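(* Let $N\ge2$, $a\in\mathbb R$, $\sigma\in\mathbb R^N$ with $\sigma_j\ge0$ for all $j$ and $\sum_{j=1}^N\sigma_j\le(N-1)/2$. Then there exist a sequence $(f_n)\subset G^{\sigma,a}$, each with finitely many nonzero Fourier coefficients, and a function $\varphi\in C_c^\infty(\mathbb R)$ such that: (i) $\sup_n\|f_n\|_{G^{\sigma,a}}<\infty$; (ii) $\sum_{k\in\dot{\mathbb Z}^N}\hat f_n(k)\varphi(\alpha\cdot k)\to\infty$ as $n\to\infty$. The sum in (ii) is the pairing $\langle\mathcal F_x[f_n],\varphi\rangle$, where $\mathcal F_x[f_n]=\sum_k\hat f_n(k)\delta_{\alpha\cdot k}$. In particular, the series defining elements of $G^{\sigma,a}$ need not converge in $\mathcal S'(\mathbb R)$.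
   Context: Standing setting: fix $N$ and $\alpha\in\mathbb R^N$ with $\alpha\cdot k\neq0$ for all $k\in\dot{\mathbb Z}^N:=\mathbb Z^N\setminus\{0\}$. Write $\langle x\rangle=(1+|x|^2)^{1/2}$. $G^{\sigma,a}$ is the space of series $f=\sum_{k\in\dot{\mathbb Z}^N}\hat f(k)e^{i(\alpha\cdot k)x}$ with $$\|f\|_{G^{\sigma,a}}=\Big(\sum_k|\alpha\cdot k|^{2a}\prod_j\langle k_j\rangle^{2\sigma_j}|\hat f(k)|^2\Big)^{1/2}<\infty.$$ *)

theory Defs
  imports "HOL-Analysis.Analysis"
begin

text \<open>Frequency vectors k in Z^N are rendered as int^'n, with N = CARD('n).
  The frequency of the mode k is alpha . k.\<close>

definition freq :: "real^'n \<Rightarrow> int^'n \<Rightarrow> real" where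
  "freq \<alpha> k = (\<Sum>j\<in>UNIV. \<alpha>$j * real_of_int (k$j))"

definition jbr :: "real \<Rightarrow> real" where
  "jbr x = sqrt (1 + x^2)"

definition G_weight :: "real^'n \<Rightarrow> real^'n \<Rightarrow> real \<Rightarrow> int^'n \<Rightarrow> real" where
  "G_weight \<alpha> \<sigma> a k =
     \<bar>freq \<alpha> k\<bar> powr (2*a) * (\<Prod>j\<in>UNIV. jbr (real_of_int (k$j)) powr (2 * \<sigma>$j))"

text \<open>A function f in G^{sigma,a} is identified with its coefficient family
  fhat on the nonzero frequency vectors (the value at 0 is irrelevant).\<close>
definition in_G :: "real^'n \<Rightarrow> real^'n \<Rightarrow> real \<Rightarrow> (int^'n \<Rightarrow> complex) \<Rightarrow> bool" where
  "in_G \<alpha> \<sigma> a fhat \<longleftrightarrow>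
     (\<lambda>k. G_weight \<alpha> \<sigma> a k * (cmod (fhat k))^2) summable_on {k. k \<noteq> 0}"

definition G_norm :: "real^'n \<Rightarrow> real^'n \<Rightarrow> real \<Rightarrow> (int^'n \<Rightarrow> complex) \<Rightarrow> real" where
  "G_norm \<alpha> \<sigma> a fhat =
     sqrt (infsum (\<lambda>k. G_weight \<alpha> \<sigma> a k * (cmod (fhat k))^2) {k. k \<noteq> 0})"

definition finite_support :: "(int^'n \<Rightarrow> complex) \<Rightarrow> bool" where
  "finite_support fhat \<longleftrightarrow> finite {k. k \<noteq> 0 \<and> fhat k \<noteq> 0}"

definition pairing :: "real^'n \<Rightarrow> (int^'n \<Rightarrow> complex) \<Rightarrow> (real \<Rightarrow> real) \<Rightarrow> complex" where
  "pairing \<alpha> fhat \<phi> = (\<Sum>k\<in>{k. k \<noteq> 0 \<and> fhat k \<noteq> 0}. fhat k * complex_of_real (\<phi> (freq \<alpha> k)))"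

definition smooth :: "(real \<Rightarrow> real) \<Rightarrow> bool" where
  "smooth \<phi> \<longleftrightarrow> (\<forall>m x. ((deriv ^^ m) \<phi>) differentiable (at x))"

definition Cc_infty :: "(real \<Rightarrow> real) \<Rightarrow> bool" where
  "Cc_infty \<phi> \<longleftrightarrow> smooth \<phi> \<and> compact (closure {x. \<phi> x \<noteq> 0})"

end

theory Submission
  imports Defs "HOL-Computational_Algebra.Polynomial" "HOL-Real_Asymp.Real_Asymp"
begin


lemma expdecay:
  assumes h: "filterlim h (at_right 0) F"
  shows "((\<lambda>y. exp (-1 / h y) / h y ^ m) \<longlongrightarrow> (0::real)) F"
proof -
  have 1: "((\<lambda>t::real. (inverse t) ^ m / exp (inverse t)) \<longlongrightarrow> 0) (at_right 0)"
    using filterlim_compose[OF tendsto_power_div_exp_0 filterlim_inverse_at_top_right] by simp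
  have eq: "inverse x ^ m / exp (inverse x) = exp (-1 / x) / x ^ m" for x :: real
  proof -
    have "exp (-1 / x) = inverse (exp (inverse x))"
      using exp_minus[of "inverse x"] by (simp add: divide_inverse)
    then show ?thesis by (simp add: divide_inverse power_inverse mult.commute)
  qed
  have "((\<lambda>t::real. exp (-1 / t) / t ^ m) \<longlongrightarrow> 0) (at_right 0)"
    using 1 unfolding eq .
  from filterlim_compose[OF this h] show ?thesis .
qed

definition Dp :: "real \<Rightarrow> real poly" where "Dp L = [:0, L, -1:]"

lemma poly_Dp: "poly (Dp L) x = x * (L - x)"
  by (simp add: Dp_def algebra_simps)


lemma alg2: fixes D E P Q c :: real assumes "D > 0" shows
 "((Q * E + E * (c / D^2) * P) * D ^ n - P * E * (real n * (c * D ^ (n - Suc 0)))) / (D ^ n * D ^ n)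
  = (Q * D^2 + P * c - real n * P * c * D) * E / D ^ (n + 2)"
proof (cases n)
  case 0 then show ?thesis using assms by (simp add: field_simps power2_eq_square)
next
  case (Suc m) then show ?thesis using assms by (simp add: field_simps power2_eq_square)
qed

definition bumpF :: "real \<Rightarrow> real poly \<Rightarrow> nat \<Rightarrow> real \<Rightarrow> real" where
  "bumpF L p n x = (if 0 < x \<and> x < L then poly p x * exp (-1 / (x * (L - x))) / (x * (L - x)) ^ n else 0)"

definition qstep :: "real \<Rightarrow> real poly \<Rightarrow> nat \<Rightarrow> real poly" where
  "qstep L p n = pderiv p * (Dp L)^2 + p * [:L, -2:] - smult (real n) (p * [:L, -2:] * Dp L)"

lemma poly_qstep: "poly (qstep L p n) x =
   poly (pderiv p) x * (x*(L-x))^2 + poly p x * (L - 2*x) - real n * poly p x * (L-2*x) * (x*(L-x))"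
  by (simp add: qstep_def poly_Dp algebra_simps)

lemma interior_deriv:
  assumes "0 < x" "x < L"
  shows "((\<lambda>y. poly p y * exp (-1 / (y * (L - y))) / (y * (L - y)) ^ n) has_real_derivative
     bumpF L (qstep L p n) (n+2) x) (at x)"
proof -
  have D: "x * (L - x) > 0" using assms by simp
  have dpow: "((\<lambda>y. (y*(L-y))^n) has_real_derivative real n * ((L - 2*x) * (x*(L-x))^(n - Suc 0))) (at x)"
  proof -
    have "((\<lambda>y. y*(L-y)) has_real_derivative L - 2*x) (at x)"
      by (auto intro!: derivative_eq_intros simp: algebra_simps)
    from DERIV_power[OF this, of n] show ?thesis by simp
  qed
  have "((\<lambda>y. poly p y * exp (-1 / (y * (L - y))) / (y * (L - y)) ^ n) has_real_derivative
   (poly (pderiv p) x * (x*(L-x))^2 + poly p x * (L - 2*x) - real n * poly p x * (L-2*x) * (x*(L-x))) * exp (-1 / (x * (L - x))) / (x * (L - x)) ^ (n+2)) (at x)"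
  proof -
    have de: "((\<lambda>y. exp (-1/(y*(L-y)))) has_real_derivative exp (-1/(x*(L-x))) * ((L-2*x)/(x*(L-x))^2)) (at x)"
    proof -
      have dD: "((\<lambda>y. y*(L-y)) has_real_derivative L - 2*x) (at x)"
        by (auto intro!: derivative_eq_intros simp: algebra_simps)
      have "((\<lambda>y. -1/(y*(L-y))) has_real_derivative (0*(x*(L-x)) - (-1)*(L-2*x))/((x*(L-x))*(x*(L-x)))) (at x)"
        by (rule DERIV_divide[OF DERIV_const dD]) (use D assms in simp)
      then have "((\<lambda>y. -1/(y*(L-y))) has_real_derivative (L-2*x)/(x*(L-x))^2) (at x)"
        by (simp add: power2_eq_square)
      then show ?thesis by (rule DERIV_fun_exp)
    qed
    have "((\<lambda>y. poly p y * exp (-1 / (y * (L - y))) / (y * (L - y)) ^ n) has_real_derivative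
      ((poly (pderiv p) x * exp (-1/(x*(L-x))) + exp (-1/(x*(L-x))) * ((L-2*x)/(x*(L-x))^2) * poly p x) * (x*(L-x))^n
        - poly p x * exp (-1/(x*(L-x))) * (real n * ((L - 2*x) * (x*(L-x))^(n - Suc 0)))) / ((x*(L-x))^n * (x*(L-x))^n)) (at x)"
      by (rule DERIV_divide[OF DERIV_mult[OF poly_DERIV de] dpow]) (use D assms in simp)
    then show ?thesis
      by (rule DERIV_cong) (rule alg2[OF D])
  qed
  then show ?thesis using assms by (simp add: bumpF_def poly_qstep)
qed

lemma bump_has_deriv:
  assumes L: "L > 0"
  shows "(bumpF L p n has_real_derivative bumpF L (qstep L p n) (n+2) x) (at x)"
proof -
  consider "x < 0" | "x = 0" | "0 < x \<and> x < L" | "x = L" | "x > L" by linarith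
  then show ?thesis
  proof cases
    case 1
    have "((\<lambda>_. 0) has_real_derivative 0) (at x)" by (rule DERIV_const)
    then have "(bumpF L p n has_real_derivative 0) (at x)"
      by (rule has_field_derivative_transform_within_open[of _ _ _ "{..<0}"]) (use 1 in \<open>auto simp: bumpF_def\<close>)
    then show ?thesis using 1 by (simp add: bumpF_def)
  next
    case 5
    have "((\<lambda>_. 0) has_real_derivative 0) (at x)" by (rule DERIV_const)
    then have "(bumpF L p n has_real_derivative 0) (at x)"
      by (rule has_field_derivative_transform_within_open[of _ _ _ "{L<..}"]) (use 5 in \<open>auto simp: bumpF_def\<close>)
    then show ?thesis using 5 by (simp add: bumpF_def)
  next
    case 3
    have "((\<lambda>y. poly p y * exp (-1 / (y * (L - y))) / (y * (L - y)) ^ n) has_real_derivative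
     bumpF L (qstep L p n) (n+2) x) (at x)" using 3 by (intro interior_deriv) auto
    then show ?thesis
      by (rule has_field_derivative_transform_within_open[of _ _ _ "{0<..<L}"])
         (use 3 in \<open>auto simp: bumpF_def\<close>)
  next
    case 2
    have "((\<lambda>y. (bumpF L p n y - bumpF L p n 0) / (y - 0)) \<longlongrightarrow> 0) (at 0)"
    proof (rule filterlim_split_at)
      show "((\<lambda>y. (bumpF L p n y - bumpF L p n 0) / (y - 0)) \<longlongrightarrow> 0) (at_left 0)"
        by (rule tendsto_eventually, rule eventually_mono[OF eventually_at_left_real[of "-1" 0]])
           (auto simp: bumpF_def)
      have hD: "filterlim (\<lambda>y. y * (L - y)) (at_right 0) (at_right (0::real))"
        unfolding filterlim_at
      proof
        show "\<forall>\<^sub>F y in at_right 0. y * (L - y) \<in> {0<..} \<and> y * (L - y) \<noteq> 0"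
          by (rule eventually_mono[OF eventually_at_right_real[OF L]]) auto
        have "((\<lambda>y. y * (L - y)) \<longlongrightarrow> 0 * (L - 0)) (at_right (0::real))"
          by (intro tendsto_intros)
        then show "((\<lambda>y. y * (L - y)) \<longlongrightarrow> 0) (at_right (0::real))" by simp
      qed
      have "((\<lambda>y. poly p y * (exp (-1 / (y * (L - y))) / (y * (L - y)) ^ (n+1)) * (L - y))
             \<longlongrightarrow> poly p 0 * 0 * (L - 0)) (at_right 0)"
        by (intro tendsto_intros expdecay[OF hD])
      then have "((\<lambda>y. poly p y * (exp (-1 / (y * (L - y))) / (y * (L - y)) ^ (n+1)) * (L - y))
             \<longlongrightarrow> 0) (at_right 0)" by simp
      then show "((\<lambda>y. (bumpF L p n y - bumpF L p n 0) / (y - 0)) \<longlongrightarrow> 0) (at_right 0)"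
      proof (rule Lim_transform_eventually)
        show "\<forall>\<^sub>F y in at_right 0. poly p y * (exp (-1 / (y * (L - y))) / (y * (L - y)) ^ (n+1)) * (L - y)
               = (bumpF L p n y - bumpF L p n 0) / (y - 0)"
          by (rule eventually_mono[OF eventually_at_right_real[OF L]]) (auto simp: bumpF_def field_simps)
      qed
    qed
    then have "(bumpF L p n has_real_derivative 0) (at 0)" by (simp add: has_field_derivative_iff)
    then show ?thesis using 2 by (simp add: bumpF_def)
  next
    case 4
    have "((\<lambda>y. (bumpF L p n y - bumpF L p n L) / (y - L)) \<longlongrightarrow> 0) (at L)"
    proof (rule filterlim_split_at)
      show "((\<lambda>y. (bumpF L p n y - bumpF L p n L) / (y - L)) \<longlongrightarrow> 0) (at_right L)"
        by (rule tendsto_eventually, rule eventually_mono[OF eventually_at_right_real[of L "L+1"]])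
           (auto simp: bumpF_def)
      have hD: "filterlim (\<lambda>y. y * (L - y)) (at_right 0) (at_left L)"
        unfolding filterlim_at
      proof
        show "\<forall>\<^sub>F y in at_left L. y * (L - y) \<in> {0<..} \<and> y * (L - y) \<noteq> 0"
          by (rule eventually_mono[OF eventually_at_left_real[OF L]]) auto
        have "((\<lambda>y. y * (L - y)) \<longlongrightarrow> L * (L - L)) (at_left L)"
          by (intro tendsto_intros)
        then show "((\<lambda>y. y * (L - y)) \<longlongrightarrow> 0) (at_left L)" by simp
      qed
      have "((\<lambda>y. - poly p y * (exp (-1 / (y * (L - y))) / (y * (L - y)) ^ (n+1)) * y)
             \<longlongrightarrow> - poly p L * 0 * L) (at_left L)"
        by (intro tendsto_intros expdecay[OF hD])
      then have "((\<lambda>y. - poly p y * (exp (-1 / (y * (L - y))) / (y * (L - y)) ^ (n+1)) * y)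
             \<longlongrightarrow> 0) (at_left L)" by simp
      then show "((\<lambda>y. (bumpF L p n y - bumpF L p n L) / (y - L)) \<longlongrightarrow> 0) (at_left L)"
      proof (rule Lim_transform_eventually)
        show "\<forall>\<^sub>F y in at_left L. - poly p y * (exp (-1 / (y * (L - y))) / (y * (L - y)) ^ (n+1)) * y
               = (bumpF L p n y - bumpF L p n L) / (y - L)"
          by (rule eventually_mono[OF eventually_at_left_real[OF L]]) (auto simp: bumpF_def field_simps)
      qed
    qed
    then have "(bumpF L p n has_real_derivative 0) (at L)" by (simp add: has_field_derivative_iff)
    then show ?thesis using 4 by (simp add: bumpF_def)
  qed
qed


definition Jset :: "'n::finite \<Rightarrow> nat \<Rightarrow> ('n \<Rightarrow> int) set" where
  "Jset i0 m = PiE (UNIV - {i0}) (\<lambda>_. {2^m ..< 2^(m+1)})"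
definition sfun :: "real^('n::finite) \<Rightarrow> 'n \<Rightarrow> ('n \<Rightarrow> int) \<Rightarrow> real" where
  "sfun \<alpha> i0 g = (\<Sum>j\<in>UNIV-{i0}. \<alpha>$j * of_int (g j))"
definition cfun :: "real^'n \<Rightarrow> 'n \<Rightarrow> ('n \<Rightarrow> int) \<Rightarrow> int" where
  "cfun \<alpha> i0 g = (if \<alpha>$i0 > 0 then \<lceil>(1 - sfun \<alpha> i0 g) / \<bar>\<alpha>$i0\<bar>\<rceil> else - \<lceil>(1 - sfun \<alpha> i0 g) / \<bar>\<alpha>$i0\<bar>\<rceil>)"
definition Kmap :: "real^'n \<Rightarrow> 'n \<Rightarrow> ('n \<Rightarrow> int) \<Rightarrow> int^'n" where
  "Kmap \<alpha> i0 g = (\<chi> j. if j = i0 then cfun \<alpha> i0 g else g j)"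
definition Sset :: "real^'n \<Rightarrow> 'n \<Rightarrow> nat \<Rightarrow> (int^'n) set" where
  "Sset \<alpha> i0 m = Kmap \<alpha> i0 ` Jset i0 m"

lemma freq_Kmap: "freq \<alpha> (Kmap \<alpha> i0 g) = \<alpha>$i0 * of_int (cfun \<alpha> i0 g) + sfun \<alpha> i0 g"
proof -
  have "freq \<alpha> (Kmap \<alpha> i0 g) = \<alpha>$i0 * of_int (Kmap \<alpha> i0 g $ i0) + (\<Sum>j\<in>UNIV-{i0}. \<alpha>$j * of_int (Kmap \<alpha> i0 g $ j))"
    unfolding freq_def by (rule sum.remove) auto
  also have "(\<Sum>j\<in>UNIV-{i0}. \<alpha>$j * of_int (Kmap \<alpha> i0 g $ j)) = sfun \<alpha> i0 g"
    unfolding sfun_def by (rule sum.cong) (auto simp: Kmap_def)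
  finally show ?thesis by (simp add: Kmap_def)
qed

lemma freq_Kmap_range:
  assumes "\<alpha>$i0 \<noteq> 0"
  shows "1 \<le> freq \<alpha> (Kmap \<alpha> i0 g) \<and> freq \<alpha> (Kmap \<alpha> i0 g) \<le> 1 + \<bar>\<alpha>$i0\<bar>"
proof -
  define b where "b = \<bar>\<alpha>$i0\<bar>"
  define y where "y = (1 - sfun \<alpha> i0 g) / b"
  have b: "b > 0" using assms by (simp add: b_def)
  have ac: "\<alpha>$i0 * of_int (cfun \<alpha> i0 g) = b * of_int \<lceil>y\<rceil>"
  proof (cases "\<alpha>$i0 > 0")
    case True then show ?thesis by (simp add: cfun_def b_def y_def)
  next
    case False then have "\<alpha>$i0 < 0" using assms by linarith
    then show ?thesis by (simp add: cfun_def b_def y_def)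
  qed
  have "y \<le> of_int \<lceil>y\<rceil>" "of_int \<lceil>y\<rceil> \<le> y + 1" by (rule le_of_int_ceiling) (rule of_int_ceiling_le_add_one)
  then have "b * y \<le> b * of_int \<lceil>y\<rceil>" "b * of_int \<lceil>y\<rceil> \<le> b * (y + 1)" using b by (auto intro: mult_left_mono)
  moreover have "b * y = 1 - sfun \<alpha> i0 g" using b by (simp add: y_def)
  ultimately show ?thesis unfolding freq_Kmap ac b_def[symmetric] by (simp add: algebra_simps)
qed

lemma Jset_mem: "g \<in> Jset i0 m \<Longrightarrow> j \<noteq> i0 \<Longrightarrow> 2^m \<le> g j \<and> g j < 2^(m+1)"
  by (auto simp: Jset_def PiE_iff)

lemma Sset_mem: "k \<in> Sset \<alpha> i0 m \<Longrightarrow> j \<noteq> i0 \<Longrightarrow> 2^m \<le> k$j \<and> k$j < 2^(m+1)"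
  by (auto simp: Sset_def Kmap_def dest: Jset_mem)

lemma finite_Jset: "finite (Jset i0 m)"
  by (auto simp: Jset_def intro!: finite_PiE)

lemma finite_Sset: "finite (Sset \<alpha> i0 m)"
  by (simp add: Sset_def finite_Jset)

lemma inj_Kmap: "inj_on (Kmap \<alpha> i0) (Jset i0 m)"
proof
  fix g g' assume g: "g \<in> Jset i0 m" and g': "g' \<in> Jset i0 m" and eq: "Kmap \<alpha> i0 g = Kmap \<alpha> i0 g'"
  show "g = g'"
  proof (rule PiE_ext)
    show "g \<in> (\<Pi>\<^sub>E i\<in>UNIV - {i0}. {2^m ..< 2^(m+1)})" using g by (simp add: Jset_def)
    show "g' \<in> (\<Pi>\<^sub>E i\<in>UNIV - {i0}. {2^m ..< 2^(m+1)})" using g' by (simp add: Jset_def)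
    fix i assume "i \<in> UNIV - {i0}"
    then show "g i = g' i" using arg_cong[OF eq, of "\<lambda>k. k $ i"] by (simp add: Kmap_def)
  qed
qed

lemma card_Sset: "card (Sset (\<alpha>::real^'n) i0 m) = 2^(m * (CARD('n) - 1))"
proof -
  have "card (Sset \<alpha> i0 m) = card (Jset i0 m)"
    unfolding Sset_def by (rule card_image[OF inj_Kmap])
  also have "\<dots> = (\<Prod>i\<in>UNIV - {i0}. card {(2::int)^m ..< 2^(m+1)})"
    unfolding Jset_def by (rule card_PiE) simp
  also have "\<dots> = (2^m) ^ (CARD('n) - 1)"
    by (simp add: card_Diff_singleton nat_power_eq)
  finally show ?thesis by (simp add: power_mult)
qed

lemma Sset_disjoint:
  assumes "j1 \<noteq> (i0::'n::finite)" "m \<noteq> m'"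
  shows "Sset \<alpha> i0 m \<inter> Sset \<alpha> i0 m' = {}"
proof (rule ccontr)
  assume "Sset \<alpha> i0 m \<inter> Sset \<alpha> i0 m' \<noteq> {}"
  then obtain k where "k \<in> Sset \<alpha> i0 m" "k \<in> Sset \<alpha> i0 m'" by blast
  from Sset_mem[OF this(1) assms(1)] Sset_mem[OF this(2) assms(1)]
  have "(2::int)^m < 2^(m'+1)" "(2::int)^m' < 2^(m+1)" by linarith+
  then have "m < m' + 1" "m' < m + 1" by (auto intro: power_less_imp_less_exp[of "2::int"])
  then show False using assms(2) by linarith
qed

lemma Sset_nonzero: "j1 \<noteq> i0 \<Longrightarrow> k \<in> Sset \<alpha> i0 m \<Longrightarrow> k \<noteq> 0"
  using Sset_mem[of k \<alpha> i0 m j1] by (auto simp: order.trans[OF one_le_power])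

lemma jbr_le: "jbr x \<le> 1 + \<bar>x\<bar>"
  unfolding jbr_def by (rule real_le_lsqrt) (auto simp: power2_eq_square algebra_simps)

lemma jbr_ge: "jbr x \<ge> 1"
  unfolding jbr_def by (rule real_le_rsqrt) simp

definition Asum :: "real^'n \<Rightarrow> real" where "Asum \<alpha> = (\<Sum>j\<in>UNIV. \<bar>\<alpha>$j\<bar>)"
definition Kc :: "real^'n \<Rightarrow> 'n \<Rightarrow> real" where "Kc \<alpha> i0 = 3 + (1 + 2 * Asum \<alpha>) / \<bar>\<alpha>$i0\<bar>"

lemma Kc_ge: "\<alpha>$i0 \<noteq> 0 \<Longrightarrow> Kc \<alpha> i0 \<ge> 3"
  unfolding Kc_def Asum_def by (auto intro!: sum_nonneg)

lemma jbr_Sset: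
  assumes ai0: "\<alpha>$i0 \<noteq> 0" and k: "k \<in> Sset \<alpha> i0 m"
  shows "jbr (of_int (k$j)) \<le> Kc \<alpha> i0 * 2^m"
proof -
  define p :: real where "p = 2^m"
  have p1: "p \<ge> 1" by (simp add: p_def)
  have K3: "Kc \<alpha> i0 \<ge> 3" by (rule Kc_ge[OF ai0])
  obtain g where g: "g \<in> Jset i0 m" and kg: "k = Kmap \<alpha> i0 g" using k by (auto simp: Sset_def)
  have gb: "\<bar>of_int (g j')\<bar> \<le> 2 * p" if "j' \<noteq> i0" for j'
  proof -
    from Jset_mem[OF g that] have h: "2^m \<le> g j'" "g j' \<le> 2 * 2^m" by auto
    have "(0::int) \<le> 2^m" by simp
    then have "0 \<le> g j'" using h by linarith
    then have "0 \<le> real_of_int (g j')" by simp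
    moreover have "real_of_int (g j') \<le> 2 * (2::real)^m"
      using h(2) by (metis of_int_le_iff of_int_numeral of_int_power of_int_mult)
    ultimately show ?thesis by (simp add: p_def)
  qed
  have "1 + \<bar>of_int (k$j)\<bar> \<le> Kc \<alpha> i0 * p"
  proof (cases "j = i0")
    case False
    then have "1 + \<bar>of_int (k$j)\<bar> \<le> 1 + 2 * p" using gb[OF False] by (simp add: kg Kmap_def)
    also have "\<dots> \<le> 3 * p" using p1 by simp
    also have "\<dots> \<le> Kc \<alpha> i0 * p" using K3 p1 by (intro mult_right_mono) auto
    finally show ?thesis .
  next
    case True
    define b where "b = \<bar>\<alpha>$i0\<bar>"
    have b: "b > 0" using ai0 by (simp add: b_def)
    define y where "y = (1 - sfun \<alpha> i0 g) / b"
    have c: "\<bar>of_int (k$j)\<bar> = \<bar>(of_int \<lceil>y\<rceil> :: real)\<bar>"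
      using True by (simp add: kg Kmap_def cfun_def y_def b_def)
    have "\<bar>(of_int \<lceil>y\<rceil> :: real)\<bar> \<le> \<bar>y\<bar> + 1"
      using le_of_int_ceiling[of y] of_int_ceiling_le_add_one[of y] by linarith
    have sb: "\<bar>sfun \<alpha> i0 g\<bar> \<le> Asum \<alpha> * (2 * p)"
    proof -
      have "\<bar>sfun \<alpha> i0 g\<bar> \<le> (\<Sum>j'\<in>UNIV-{i0}. \<bar>\<alpha>$j' * of_int (g j')\<bar>)"
        unfolding sfun_def by (rule sum_abs)
      also have "\<dots> \<le> (\<Sum>j'\<in>UNIV-{i0}. \<bar>\<alpha>$j'\<bar> * (2 * p))"
        by (rule sum_mono) (auto simp: abs_mult intro!: mult_left_mono gb)
      also have "\<dots> \<le> (\<Sum>j'\<in>UNIV. \<bar>\<alpha>$j'\<bar> * (2 * p))"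
        by (rule sum_mono2) (use p1 in auto)
      finally show ?thesis by (simp add: Asum_def sum_distrib_right)
    qed
    have A0: "Asum \<alpha> \<ge> 0" unfolding Asum_def by (auto intro: sum_nonneg)
    have "\<bar>y\<bar> \<le> (1 + \<bar>sfun \<alpha> i0 g\<bar>) / b"
      unfolding y_def using b by (auto simp: abs_divide intro!: divide_right_mono)
    also have "\<dots> \<le> (p + 2 * Asum \<alpha> * p) / b"
      using sb p1 b by (intro divide_right_mono) auto
    also have "\<dots> = (1 + 2 * Asum \<alpha>) / b * p" by (simp add: field_simps)
    finally have "\<bar>y\<bar> \<le> (1 + 2 * Asum \<alpha>) / b * p" .
    then have "1 + \<bar>of_int (k$j)\<bar> \<le> 2 + (1 + 2 * Asum \<alpha>) / b * p"
      using c \<open>\<bar>(of_int \<lceil>y\<rceil> :: real)\<bar> \<le> \<bar>y\<bar> + 1\<close> by linarith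
    also have "\<dots> \<le> Kc \<alpha> i0 * p"
      using p1 by (simp add: Kc_def b_def[symmetric] algebra_simps)
    finally show ?thesis .
  qed
  then show ?thesis using jbr_le[of "of_int (k$j)"] by (simp add: p_def)
qed

definition WB :: "real^'n \<Rightarrow> 'n \<Rightarrow> real \<Rightarrow> real" where
  "WB \<alpha> i0 a = (1 + \<bar>\<alpha>$i0\<bar>) powr (2*\<bar>a\<bar>) * Kc \<alpha> i0 ^ (CARD('n) - 1)"

lemma WB_pos: "\<alpha>$i0 \<noteq> 0 \<Longrightarrow> WB \<alpha> i0 a > 0"
  unfolding WB_def using Kc_ge[of \<alpha> i0] by auto

lemma weight_Sset:
  fixes \<alpha> \<sigma> :: "real^'n"
  assumes ai0: "\<alpha>$i0 \<noteq> 0" and sig_nonneg: "\<And>j. \<sigma>$j \<ge> 0"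
    and sig_sum: "(\<Sum>j\<in>UNIV. \<sigma>$j) \<le> (real CARD('n) - 1) / 2"
    and k: "k \<in> Sset \<alpha> i0 m"
  shows "G_weight \<alpha> \<sigma> a k \<le> WB \<alpha> i0 a * 2^(m*(CARD('n)-1))"
proof -
  define q where "q = Kc \<alpha> i0 * 2^m"
  have q1: "q \<ge> 1" using Kc_ge[OF ai0] by (simp add: q_def one_le_power order.trans[OF _ mult_mono[of 1 _ 1]])
  obtain g where kg: "k = Kmap \<alpha> i0 g" using k by (auto simp: Sset_def)
  have fr: "1 \<le> freq \<alpha> k" "freq \<alpha> k \<le> 1 + \<bar>\<alpha>$i0\<bar>" using freq_Kmap_range[OF ai0] kg by auto
  have h1: "\<bar>freq \<alpha> k\<bar> powr (2*a) \<le> (1 + \<bar>\<alpha>$i0\<bar>) powr (2*\<bar>a\<bar>)"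
  proof -
    have "\<bar>freq \<alpha> k\<bar> powr (2*a) \<le> \<bar>freq \<alpha> k\<bar> powr (2*\<bar>a\<bar>)"
      by (rule powr_mono) (use fr in auto)
    also have "\<dots> \<le> (1 + \<bar>\<alpha>$i0\<bar>) powr (2*\<bar>a\<bar>)"
      by (rule powr_mono2) (use fr in auto)
    finally show ?thesis .
  qed
  have h2: "(\<Prod>j\<in>UNIV. jbr (real_of_int (k$j)) powr (2 * \<sigma>$j)) \<le> (\<Prod>j\<in>UNIV. q powr (2 * \<sigma>$j))"
  proof (rule prod_mono)
    fix j :: 'n
    show "0 \<le> jbr (real_of_int (k$j)) powr (2 * \<sigma>$j) \<and> jbr (real_of_int (k$j)) powr (2 * \<sigma>$j) \<le> q powr (2 * \<sigma>$j)"
      using jbr_Sset[OF ai0 k, of j] jbr_ge[of "real_of_int (k$j)"] sig_nonneg[of j]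
      by (auto simp: q_def intro!: powr_mono2)
  qed
  have h3: "(\<Prod>j\<in>UNIV. q powr (2 * \<sigma>$j)) = q powr (\<Sum>j\<in>UNIV. 2 * \<sigma>$j)"
    using q1 by (simp add: powr_sum)
  have c1: "CARD('n) \<ge> 1" by (simp add: Suc_leI)
  have h4: "q powr (\<Sum>j\<in>UNIV. 2 * \<sigma>$j) \<le> q powr real (CARD('n) - 1)"
  proof (rule powr_mono[OF _ q1])
    have "(\<Sum>j\<in>UNIV. 2 * \<sigma>$j) = 2 * (\<Sum>j\<in>UNIV. \<sigma>$j)" by (simp add: sum_distrib_left)
    also have "\<dots> \<le> real CARD('n) - 1" using sig_sum by simp
    also have "\<dots> = real (CARD('n) - 1)" using c1 by (simp add: of_nat_diff)
    finally show "(\<Sum>j\<in>UNIV. 2 * \<sigma>$j) \<le> real (CARD('n) - 1)" .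
  qed
  have h5: "q powr real (CARD('n) - 1) = Kc \<alpha> i0 ^ (CARD('n) - 1) * 2^(m*(CARD('n)-1))"
  proof -
    have "q powr real (CARD('n) - 1) = q ^ (CARD('n) - 1)" by (rule powr_realpow) (use q1 in simp)
    then show ?thesis by (simp only: q_def power_mult_distrib power_mult)
  qed
  have "G_weight \<alpha> \<sigma> a k \<le> (1 + \<bar>\<alpha>$i0\<bar>) powr (2*\<bar>a\<bar>) * (Kc \<alpha> i0 ^ (CARD('n) - 1) * 2^(m*(CARD('n)-1)))"
    unfolding G_weight_def
    by (rule mult_mono[OF h1]) (use h2 h3 h4 h5 in \<open>auto intro!: prod_nonneg\<close>)
  then show ?thesis by (simp add: WB_def mult.assoc)
qed



lemma bump_deriv_eq: "L > 0 \<Longrightarrow> deriv (bumpF L p n) = bumpF L (qstep L p n) (n+2)"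
  by (rule ext, rule DERIV_imp_deriv, rule bump_has_deriv)

lemma bump_Cc:
  assumes L: "L > 0"
  shows "Cc_infty (bumpF L p n)"
proof -
  have "\<exists>q k. (deriv ^^ m) (bumpF L p n) = bumpF L q k" for m
  proof (induction m)
    case 0 then show ?case by auto
  next
    case (Suc m)
    then obtain q k where "(deriv ^^ m) (bumpF L p n) = bumpF L q k" by blast
    then have "(deriv ^^ Suc m) (bumpF L p n) = bumpF L (qstep L q k) (k+2)"
      using bump_deriv_eq[OF L] by simp
    then show ?case by blast
  qed
  then have "smooth (bumpF L p n)"
    unfolding smooth_def
    by (metis bump_has_deriv[OF L] differentiable_def has_field_derivative_def)
  moreover have "compact (closure {x. bumpF L p n x \<noteq> 0})"
    unfolding compact_closure
    by (rule bounded_subset[OF bounded_closed_interval[of 0 L]]) (auto simp: bumpF_def split: if_splits)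
  ultimately show ?thesis by (simp add: Cc_infty_def)
qed

lemma bump_low:
  assumes "1 \<le> x" "x \<le> L - 1"
  shows "bumpF L 1 0 x \<ge> exp (-1)"
proof -
  have D: "1 \<le> x * (L - x)" using mult_mono[of 1 x 1 "L - x"] assms by simp
  then have "-1 \<le> -1 / (x * (L - x))" by (simp add: field_simps)
  then show ?thesis using assms by (simp add: bumpF_def)
qed

lemma lim_test: "B > 0 \<Longrightarrow> filterlim (\<lambda>n. exp (-1) * sqrt (real n / B)) at_top sequentially"
  by real_asymp



theorem lemma5p2:
  fixes \<alpha> :: "real^'n" and \<sigma> :: "real^'n" and a :: real
  assumes nonres: "\<And>k::int^'n. k \<noteq> 0 \<Longrightarrow> freq \<alpha> k \<noteq> 0"
    and N2: "CARD('n) \<ge> 2"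
    and sig_nonneg: "\<And>j. \<sigma>$j \<ge> 0"
    and sig_sum: "(\<Sum>j\<in>UNIV. \<sigma>$j) \<le> (real CARD('n) - 1) / 2"
  shows "\<exists>(f :: nat \<Rightarrow> int^'n \<Rightarrow> complex) (\<phi> :: real \<Rightarrow> real).
           (\<forall>n. in_G \<alpha> \<sigma> a (f n) \<and> finite_support (f n)) \<and>
           Cc_infty \<phi> \<and>
           (\<exists>C. \<forall>n. G_norm \<alpha> \<sigma> a (f n) \<le> C) \<and>
           (\<forall>n. Im (pairing \<alpha> (f n) \<phi>) = 0) \<and>
           filterlim (\<lambda>n. Re (pairing \<alpha> (f n) \<phi>)) at_top sequentially"
proof -
  define i0 :: 'n where "i0 = undefined"
  have "card (UNIV - {i0}) \<ge> 1" using N2 by (simp add: card_Diff_singleton)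
  then have "UNIV - {i0} \<noteq> {}" by (metis card.empty not_one_le_zero)
  then obtain j1 where "j1 \<in> UNIV - {i0}" by blast
  then have j1: "j1 \<noteq> i0" by blast
  have ai0: "\<alpha>$i0 \<noteq> 0"
  proof -
    have "freq \<alpha> (axis i0 1) \<noteq> 0" by (rule nonres) simp
    moreover have "freq \<alpha> (axis i0 1) = \<alpha>$i0"
      by (simp add: freq_def axis_def if_distrib cong: if_cong)
    ultimately show ?thesis by simp
  qed
  define \<beta> where "\<beta> = \<bar>\<alpha>$i0\<bar>"
  define L where "L = 2 + \<beta>"
  define \<phi> where "\<phi> = bumpF L 1 0"
  define w where "w = G_weight \<alpha> \<sigma> a"
  define U where "U M = (\<Union>m<M. Sset \<alpha> i0 m)" for M
  define W where "W M = (\<Sum>k\<in>U M. 1 / w k)" for M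
  define t where "t M = 1 / sqrt (W M)" for M
  define f where "f M k = complex_of_real (if k \<in> U M then t M / w k else 0)" for M k
  define B where "B = WB \<alpha> i0 a"
  have Bpos: "B > 0" using WB_pos[OF ai0] by (simp add: B_def)
  have finU: "finite (U M)" for M by (simp add: U_def finite_Sset)
  have Unz: "k \<in> U M \<Longrightarrow> k \<noteq> 0" for k M using Sset_nonzero[OF j1] by (auto simp: U_def)
  have Ufr: "1 \<le> freq \<alpha> k \<and> freq \<alpha> k \<le> 1 + \<beta>" if "k \<in> U M" for k M
    using that freq_Kmap_range[OF ai0] by (auto simp: U_def Sset_def \<beta>_def)
  have wpos: "w k > 0" if "k \<noteq> 0" for k
  proof -
    have "0 < \<bar>freq \<alpha> k\<bar> powr (2 * a)" using nonres[OF that] by simp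
    moreover have "0 < (\<Prod>j\<in>UNIV. jbr (real_of_int (k $ j)) powr (2 * \<sigma> $ j))"
    proof (rule prod_pos)
      fix j :: 'n
      have "jbr (real_of_int (k $ j)) \<noteq> 0" using jbr_ge[of "real_of_int (k $ j)"] by linarith
      then show "0 < jbr (real_of_int (k $ j)) powr (2 * \<sigma> $ j)" by simp
    qed
    ultimately show ?thesis by (simp add: w_def G_weight_def)
  qed
  have W0: "W M \<ge> 0" for M unfolding W_def
  proof (rule sum_nonneg)
    fix k assume "k \<in> U M"
    then have "w k > 0" using wpos Unz by blast
    then show "0 \<le> 1 / w k" by simp
  qed
  have t0: "t M \<ge> 0" for M using W0 by (simp add: t_def)
  have tW: "t M * W M = sqrt (W M)" for M using W0[of M] by (simp add: t_def real_div_sqrt)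
  have Wlow: "W M \<ge> real M / B" for M
  proof -
    have "W M = (\<Sum>m<M. \<Sum>k\<in>Sset \<alpha> i0 m. 1 / w k)"
      unfolding W_def U_def
      by (rule sum.UNION_disjoint) (auto simp: finite_Sset dest: Sset_disjoint[OF j1])
    also have "\<dots> \<ge> (\<Sum>m<M. 1 / B)"
    proof (rule sum_mono)
      fix m assume "m \<in> {..<M}"
      have "real (card (Sset \<alpha> i0 m)) * (1 / (B * 2^(m*(CARD('n)-1)))) \<le> (\<Sum>k\<in>Sset \<alpha> i0 m. 1 / w k)"
      proof (rule sum_bounded_below)
        fix k assume k: "k \<in> Sset \<alpha> i0 m"
        have "w k \<le> B * 2^(m*(CARD('n)-1))"
          using weight_Sset[OF ai0 sig_nonneg sig_sum k] by (simp add: w_def B_def)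
        moreover have "w k > 0" using wpos Sset_nonzero[OF j1 k] by blast
        ultimately show "1 / (B * 2^(m*(CARD('n)-1))) \<le> 1 / w k"
          by (intro divide_left_mono) auto
      qed
      then show "1 / B \<le> (\<Sum>k\<in>Sset \<alpha> i0 m. 1 / w k)"
        using Bpos by (simp add: card_Sset)
    qed
    finally show ?thesis by (simp add: divide_inverse)
  qed
  have sumF: "(\<Sum>k\<in>U M. w k * (cmod (f M k))^2) = t M ^ 2 * W M" for M
    unfolding W_def sum_distrib_left
  proof (rule sum.cong[OF refl])
    fix k assume k: "k \<in> U M"
    have "w k > 0" using wpos Unz[OF k] by blast
    moreover have "f M k = complex_of_real (t M / w k)" using k by (simp add: f_def del: of_real_divide)
    moreover have "t M / w k \<ge> 0" using t0[of M] \<open>w k > 0\<close> by simp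
    ultimately have c: "cmod (f M k) = t M / w k" by (simp only: norm_of_real abs_of_nonneg)
    show "w k * (cmod (f M k))^2 = t M ^ 2 * (1 / w k)"
      unfolding c using \<open>w k > 0\<close> by (simp add: power2_eq_square field_simps)
  qed
  have infF: "(\<lambda>k. w k * (cmod (f M k))^2) summable_on {k. k \<noteq> 0} \<and>
              infsum (\<lambda>k. w k * (cmod (f M k))^2) {k. k \<noteq> 0} = t M ^ 2 * W M" for M
  proof -
    have c1: "(\<lambda>k. w k * (cmod (f M k))^2) summable_on {k. k \<noteq> 0} \<longleftrightarrow> (\<lambda>k. w k * (cmod (f M k))^2) summable_on U M"
      by (rule summable_on_cong_neutral) (auto simp: f_def dest: Unz)
    have c2: "infsum (\<lambda>k. w k * (cmod (f M k))^2) {k. k \<noteq> 0} = infsum (\<lambda>k. w k * (cmod (f M k))^2) (U M)"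
      by (rule infsum_cong_neutral) (auto simp: f_def dest: Unz)
    show ?thesis using c1 c2 finU[of M] sumF[of M] by simp
  qed
  have pair: "pairing \<alpha> (f M) \<phi> = complex_of_real (\<Sum>k\<in>U M. t M / w k * \<phi> (freq \<alpha> k))" for M
  proof -
    have "pairing \<alpha> (f M) \<phi> = (\<Sum>k\<in>U M. f M k * complex_of_real (\<phi> (freq \<alpha> k)))"
      unfolding pairing_def
      by (rule sum.mono_neutral_left[OF finU]) (auto simp: f_def split: if_splits dest: Unz)
    also have "\<dots> = complex_of_real (\<Sum>k\<in>U M. t M / w k * \<phi> (freq \<alpha> k))"
      by (simp add: f_def)
    finally show ?thesis .
  qed
  have Rlow: "(\<Sum>k\<in>U M. t M / w k * \<phi> (freq \<alpha> k)) \<ge> exp (-1) * sqrt (real M / B)" for M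
  proof -
    have "exp (-1) * sqrt (real M / B) \<le> exp (-1) * sqrt (W M)"
      using Wlow[of M] by simp
    also have "\<dots> = exp (-1) * (t M * W M)" by (simp only: tW)
    also have "\<dots> = (\<Sum>k\<in>U M. t M / w k * exp (-1))"
      unfolding W_def sum_distrib_left by (rule sum.cong) (simp_all add: field_simps)
    also have "\<dots> \<le> (\<Sum>k\<in>U M. t M / w k * \<phi> (freq \<alpha> k))"
    proof (rule sum_mono)
      fix k assume k: "k \<in> U M"
      have "\<phi> (freq \<alpha> k) \<ge> exp (-1)" unfolding \<phi>_def
        by (rule bump_low) (use Ufr[OF k] in \<open>auto simp: L_def\<close>)
      moreover have "t M / w k \<ge> 0" using t0 wpos[OF Unz[OF k]] by simp
      ultimately show "t M / w k * exp (-1) \<le> t M / w k * \<phi> (freq \<alpha> k)"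
        by (rule mult_left_mono)
    qed
    finally show ?thesis .
  qed
  show ?thesis
  proof (intro exI[of _ f] exI[of _ \<phi>] conjI allI)
    fix n
    show "in_G \<alpha> \<sigma> a (f n)" using infF[of n] by (simp add: in_G_def w_def)
    show "finite_support (f n)" unfolding finite_support_def
      by (rule finite_subset[OF _ finU[of n]]) (auto simp: f_def split: if_splits)
    show "Im (pairing \<alpha> (f n) \<phi>) = 0" by (simp add: pair)
  next
    show "Cc_infty \<phi>" unfolding \<phi>_def by (rule bump_Cc) (simp add: L_def \<beta>_def)
  next
    have "G_norm \<alpha> \<sigma> a (f n) \<le> 1" for n
    proof -
      have "G_norm \<alpha> \<sigma> a (f n) = sqrt (t n ^ 2 * W n)"
        using infF[of n] by (simp add: G_norm_def w_def)
      also have "t n ^ 2 * W n \<le> 1"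
        using W0[of n] by (cases "W n = 0") (auto simp: t_def power_divide)
      then have "sqrt (t n ^ 2 * W n) \<le> 1" by simp
      finally show ?thesis .
    qed
    then show "\<exists>C. \<forall>n. G_norm \<alpha> \<sigma> a (f n) \<le> C" by blast
  next
    have "filterlim (\<lambda>n. exp (-1) * sqrt (real n / B)) at_top sequentially"
      using Bpos by real_asymp
    then show "filterlim (\<lambda>n. Re (pairing \<alpha> (f n) \<phi>)) at_top sequentially"
    proof (rule filterlim_at_top_mono)
      show "\<forall>\<^sub>F n in sequentially. exp (-1) * sqrt (real n / B) \<le> Re (pairing \<alpha> (f n) \<phi>)"
        by (rule always_eventually) (simp only: pair Re_complex_of_real Rlow simp_thms)
    qed
  qed
qed


end
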